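(* Let $\mathcal{T}$ be a tangle of order $k$ in a connectivity system $(E,\lambda)$. Let $X$ be a $\mathcal{T}$-strong $k$-separating set, and let $\mathcal{F}$ be the set of fully closed $k$-separating sets that contain $X$. Then $\bigcap \mathcal{F}$ is a fully closed $k$-separating set that contains $X$.
   Context: A connectivity system is a pair $(E,\lambda)$ with $E$ finite and $\lambda$ an integer-valued symmetric ($\lambda(X)=\lambda(E-X)$) submodular function on subsets of $E$. $X$ is $k$-separating if $\lambda(X)\le k$. A tangle of order $k$ is a collection $\mathcal T$ of subsets of $E$ with (T1) $\lambda(A)<k$ for $A\in\mathcal T$; (T2) if $\lambda(A)\le k-1$ then $A\in\mathcal T$ or $E-A\in\mathcal T$; (T3) $A\cup B\cup C\ne E$ for $A,B,C\in\mathcal T$; (T4) $E-\{e\}\notin\mathcal T$ for $e\in E$. A set is $\mathcal T$-weak if contained in a member of $\mathcal T$, and $\mathcal T$-strong otherwise. A $\mathcal T$-strong $k$-separating set $X$ is fully closed if $X\cup Y$ is not $k$-separating for every nonempty $\mathcal T$-weak $Y\subseteq E-X$. *)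

theory Defs
  imports Main
begin

definition connectivity_system :: "'a set \<Rightarrow> ('a set \<Rightarrow> int) \<Rightarrow> bool" where
  "connectivity_system E lam \<longleftrightarrow> finite E \<and>
     (\<forall>X. X \<subseteq> E \<longrightarrow> lam X = lam (E - X)) \<and>
     (\<forall>X Y. X \<subseteq> E \<longrightarrow> Y \<subseteq> E \<longrightarrow> lam (X \<union> Y) + lam (X \<inter> Y) \<le> lam X + lam Y)"

definition k_separating :: "('a set \<Rightarrow> int) \<Rightarrow> int \<Rightarrow> 'a set \<Rightarrow> bool" where
  "k_separating lam k X \<longleftrightarrow> lam X \<le> k"

definition tangle :: "'a set \<Rightarrow> ('a set \<Rightarrow> int) \<Rightarrow> int \<Rightarrow> 'a set set \<Rightarrow> bool" where
  "tangle E lam k T \<longleftrightarrow> T \<subseteq> Pow E \<and>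
     (\<forall>A\<in>T. lam A < k) \<and>
     (\<forall>A. A \<subseteq> E \<longrightarrow> lam A \<le> k - 1 \<longrightarrow> A \<in> T \<or> E - A \<in> T) \<and>
     (\<forall>A\<in>T. \<forall>B\<in>T. \<forall>C\<in>T. A \<union> B \<union> C \<noteq> E) \<and>
     (\<forall>e\<in>E. E - {e} \<notin> T)"

definition T_weak :: "'a set set \<Rightarrow> 'a set \<Rightarrow> bool" where
  "T_weak T Y \<longleftrightarrow> (\<exists>A\<in>T. Y \<subseteq> A)"

definition T_strong :: "'a set set \<Rightarrow> 'a set \<Rightarrow> bool" where
  "T_strong T Y \<longleftrightarrow> \<not> T_weak T Y"

definition fully_closed :: "'a set \<Rightarrow> ('a set \<Rightarrow> int) \<Rightarrow> int \<Rightarrow> 'a set set \<Rightarrow> 'a set \<Rightarrow> bool" where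
  "fully_closed E lam k T X \<longleftrightarrow> X \<subseteq> E \<and> T_strong T X \<and> k_separating lam k X \<and>
     (\<forall>Y. Y \<subseteq> E - X \<longrightarrow> Y \<noteq> {} \<longrightarrow> T_weak T Y \<longrightarrow> \<not> k_separating lam k (X \<union> Y))"

end

theory Submission
  imports Defs
begin

lemma lamE_le:
  assumes cs: "connectivity_system E lam" and Z: "Z \<subseteq> E" "lam Z \<le> k"
  shows "lam E \<le> k"
proof -
  have c3: "finite E \<and> (\<forall>X. X \<subseteq> E \<longrightarrow> lam X = lam (E - X)) \<and>
     (\<forall>X Y. X \<subseteq> E \<longrightarrow> Y \<subseteq> E \<longrightarrow> lam (X \<union> Y) + lam (X \<inter> Y) \<le> lam X + lam Y)"
    using cs unfolding connectivity_system_def by assumption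
  have sym: "\<And>X. X \<subseteq> E \<Longrightarrow> lam X = lam (E - X)"
    using conjunct1[OF conjunct2[OF c3]] by blast
  have sub: "\<And>X Y. X \<subseteq> E \<Longrightarrow> Y \<subseteq> E \<Longrightarrow> lam (X \<union> Y) + lam (X \<inter> Y) \<le> lam X + lam Y"
    using conjunct2[OF conjunct2[OF c3]] by blast
  have "lam (Z \<union> (E - Z)) + lam (Z \<inter> (E - Z)) \<le> lam Z + lam (E - Z)" using sub[of Z "E - Z"] Z by auto
  moreover have "Z \<union> (E - Z) = E" "Z \<inter> (E - Z) = {}" using Z by auto
  moreover have "lam (E - Z) = lam Z" using sym[OF Z(1)] by simp
  moreover have "lam {} = lam E" using sym[of E] by simp
  ultimately show ?thesis using Z by simp
qed

lemma key:
  assumes cs: "connectivity_system E lam" and tg: "tangle E lam k T"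
    and Z: "fully_closed E lam k T Z" and WZ: "W \<subseteq> Z" and Ws: "T_strong T W"
    and Yw: "T_weak T Y" and WY: "lam (W \<union> Y) \<le> k"
  shows "Y \<subseteq> Z"
proof (rule ccontr)
  assume nY: "\<not> Y \<subseteq> Z"
  have c3: "finite E \<and> (\<forall>X. X \<subseteq> E \<longrightarrow> lam X = lam (E - X)) \<and>
     (\<forall>X Y. X \<subseteq> E \<longrightarrow> Y \<subseteq> E \<longrightarrow> lam (X \<union> Y) + lam (X \<inter> Y) \<le> lam X + lam Y)"
    using cs unfolding connectivity_system_def by assumption
  have sym: "\<And>X. X \<subseteq> E \<Longrightarrow> lam X = lam (E - X)"
    using conjunct1[OF conjunct2[OF c3]] by blast
  have sub: "\<And>X Y. X \<subseteq> E \<Longrightarrow> Y \<subseteq> E \<Longrightarrow> lam (X \<union> Y) + lam (X \<inter> Y) \<le> lam X + lam Y"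
    using conjunct2[OF conjunct2[OF c3]] by blast
  have TP: "T \<subseteq> Pow E" and T2: "\<And>A. A \<subseteq> E \<Longrightarrow> lam A \<le> k - 1 \<Longrightarrow> A \<in> T \<or> E - A \<in> T"
    using tg unfolding tangle_def by auto
  have ZE: "Z \<subseteq> E" and Zk: "lam Z \<le> k"
   and Zc: "\<And>Y. Y \<subseteq> E - Z \<Longrightarrow> Y \<noteq> {} \<Longrightarrow> T_weak T Y \<Longrightarrow> \<not> lam (Z \<union> Y) \<le> k"
    using Z unfolding fully_closed_def k_separating_def by auto
  obtain A where A: "A \<in> T" "Y \<subseteq> A" using Yw unfolding T_weak_def by auto
  have YE: "Y \<subseteq> E" using A TP by auto
  have WE: "W \<subseteq> E" using WZ ZE by auto
  have "\<not> lam (Z \<union> (Y - Z)) \<le> k"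
    by (rule Zc) (use nY YE A in \<open>auto simp: T_weak_def\<close>)
  moreover have "Z \<union> (Y - Z) = Z \<union> (W \<union> Y)" using WZ by auto
  moreover have "lam (Z \<union> (W \<union> Y)) + lam (Z \<inter> (W \<union> Y)) \<le> lam Z + lam (W \<union> Y)"
    using sub[of Z "W \<union> Y"] ZE WE YE by auto
  ultimately have lU: "lam (Z \<inter> (W \<union> Y)) \<le> k - 1" using Zk WY by simp
  have "Z \<inter> (W \<union> Y) \<in> T \<or> E - (Z \<inter> (W \<union> Y)) \<in> T" by (rule T2[OF _ lU]) (use ZE in blast)
  moreover have "Z \<inter> (W \<union> Y) \<notin> T" using Ws WZ unfolding T_strong_def T_weak_def by auto
  ultimately have EU: "E - (Z \<inter> (W \<union> Y)) \<in> T" by auto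
  have "\<not> lam (Z \<union> (E - Z)) \<le> k"
    by (rule Zc) (use nY YE EU in \<open>auto simp: T_weak_def\<close>)
  moreover have "Z \<union> (E - Z) = E" using ZE by auto
  ultimately show False using lamE_le[OF cs ZE Zk] by simp
qed

lemma closure_exists:
  assumes cs: "connectivity_system E lam" and tg: "tangle E lam k T"
  shows "W \<subseteq> E \<Longrightarrow> T_strong T W \<Longrightarrow> lam W \<le> k \<Longrightarrow>
    \<exists>M. fully_closed E lam k T M \<and> W \<subseteq> M \<and> (\<forall>Z. fully_closed E lam k T Z \<and> W \<subseteq> Z \<longrightarrow> M \<subseteq> Z)"
proof (induction "card (E - W)" arbitrary: W rule: less_induct)
  case less
  have fin: "finite E" using cs unfolding connectivity_system_def by auto
  show ?case
  proof (cases "fully_closed E lam k T W")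
    case True
    then show ?thesis by auto
  next
    case False
    then obtain Y where Y: "Y \<subseteq> E - W" "Y \<noteq> {}" "T_weak T Y" "lam (W \<union> Y) \<le> k"
      using less.prems unfolding fully_closed_def k_separating_def by auto
    have lt: "card (E - (W \<union> Y)) < card (E - W)"
      by (rule psubset_card_mono) (use fin Y in auto)
    have st: "T_strong T (W \<union> Y)" using less.prems(2) unfolding T_strong_def T_weak_def by auto
    have WYE: "W \<union> Y \<subseteq> E" using less.prems(1) Y(1) by blast
    obtain M where M: "fully_closed E lam k T M" "W \<union> Y \<subseteq> M"
      "\<forall>Z. fully_closed E lam k T Z \<and> W \<union> Y \<subseteq> Z \<longrightarrow> M \<subseteq> Z"
      using less.hyps[OF lt WYE st Y(4)] by blast
    have "\<forall>Z. fully_closed E lam k T Z \<and> W \<subseteq> Z \<longrightarrow> M \<subseteq> Z"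
    proof (intro allI impI)
      fix Z assume Z: "fully_closed E lam k T Z \<and> W \<subseteq> Z"
      have "Y \<subseteq> Z" using key[OF cs tg _ _ less.prems(2) Y(3) Y(4)] Z by auto
      then show "M \<subseteq> Z" using M(3) Z by auto
    qed
    then show ?thesis using M by auto
  qed
qed

theorem corollary3p2:
  fixes E :: "'a set" and lam :: "'a set \<Rightarrow> int" and k :: int
    and T :: "'a set set" and X :: "'a set"
  assumes "connectivity_system E lam"
    and "tangle E lam k T"
    and "X \<subseteq> E" and "T_strong T X" and "k_separating lam k X"
  shows "fully_closed E lam k T (\<Inter> {Z. fully_closed E lam k T Z \<and> X \<subseteq> Z})
         \<and> X \<subseteq> \<Inter> {Z. fully_closed E lam k T Z \<and> X \<subseteq> Z}"
proof -
  obtain M where M: "fully_closed E lam k T M" "X \<subseteq> M"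
     "\<forall>Z. fully_closed E lam k T Z \<and> X \<subseteq> Z \<longrightarrow> M \<subseteq> Z"
    using closure_exists[OF assms(1,2,3,4)] assms(5) unfolding k_separating_def by auto
  have "\<Inter> {Z. fully_closed E lam k T Z \<and> X \<subseteq> Z} = M"
  proof (rule antisym)
    show "\<Inter> {Z. fully_closed E lam k T Z \<and> X \<subseteq> Z} \<subseteq> M"
      using M(1,2) by (intro Inter_lower) simp
    show "M \<subseteq> \<Inter> {Z. fully_closed E lam k T Z \<and> X \<subseteq> Z}"
      using M(3) by (intro Inter_greatest) simp
  qed
  then show ?thesis using M by simp
qed

end
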